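(* Let $d\in\mathbb{N}$ and let $\alpha$ be an ordinal. Then $A_\alpha(\mathbb{N}_\omega^d)$ is the set of $d$-tuples in $\mathbb{N}_\omega^d$ having fewer than $\alpha$ components equal to $\omega$.
   Context: $\mathbb{N}_\omega=\mathbb{N}\cup\{\omega\}$ with $n\le\omega$ for all $n$, and $\mathbb{N}_\omega^d$ is ordered componentwise. In a partially ordered set $Z$, an acceleration candidate is a strictly increasing sequence $z_0<z_1<\cdots$; it goes through a set $A$ if some $z_i\in A$, and is below $z$ if $z_i\le z$ for all $i$. Define $A_0(Z)=\emptyset$ and, for an ordinal $\alpha>0$, $A_\alpha(Z)$ as the set of $z\in Z$ such that every acceleration candidate below $z$ goes through $A_\beta(Z)$ for some $\beta<\alpha$. *)

theory Defs
  imports Main "HOL-Library.Extended_Nat"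
begin

text \<open>N_omega is modelled by enat (omega = \<infinity>). N_omega^d is modelled as the set of
  functions nat => enat that vanish outside {0..<d}, ordered componentwise
  (the pointwise order on functions).\<close>

definition Nomega :: "nat \<Rightarrow> (nat \<Rightarrow> enat) set" where
  "Nomega d = {x. \<forall>i\<ge>d. x i = 0}"

definition acc_candidate :: "'a::order set \<Rightarrow> (nat \<Rightarrow> 'a) \<Rightarrow> bool" where
  "acc_candidate Z s \<longleftrightarrow> (\<forall>i. s i \<in> Z) \<and> (\<forall>i. s i < s (Suc i))"

definition goes_through :: "(nat \<Rightarrow> 'a) \<Rightarrow> 'a set \<Rightarrow> bool" where
  "goes_through s A \<longleftrightarrow> (\<exists>i. s i \<in> A)"

definition cand_below :: "(nat \<Rightarrow> 'a::order) \<Rightarrow> 'a \<Rightarrow> bool" where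
  "cand_below s z \<longleftrightarrow> (\<forall>i. s i \<le> z)"

text \<open>Ordinals are represented by elements of an arbitrary well-ordered type 'o;
  the ordinal denoted by alpha is the order type of {beta. beta < alpha}.\<close>

definition A_step :: "'a::order set \<Rightarrow> ('o::wellorder \<Rightarrow> 'a set) \<Rightarrow> 'o \<Rightarrow> 'a set" where
  "A_step Z R a = (if (\<forall>b. \<not> b < a) then {}
     else {z \<in> Z. \<forall>s. acc_candidate Z s \<and> cand_below s z \<longrightarrow>
                     (\<exists>b<a. goes_through s (R b))})"

definition A_level :: "'a::order set \<Rightarrow> 'o::wellorder \<Rightarrow> 'a set" where
  "A_level Z = wfrec {(b, a). b < a} (A_step Z)"

lemma A_level_eq:
  "A_level Z a = (if (\<forall>b. \<not> b < a) then {}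
     else {z \<in> Z. \<forall>s. acc_candidate Z s \<and> cand_below s z \<longrightarrow>
                     (\<exists>b<a. goes_through s (A_level Z b))})"
proof -
  have wf: "wf {(b, a::'b). b < a}" using wf by (simp add: wf_def)
  show ?thesis
    apply (subst A_level_def)
    apply (subst wfrec[OF wf])
    apply (simp add: A_step_def A_level_def)
    apply (intro impI Collect_cong conj_cong refl all_cong imp_cong ex_cong)
    apply (auto simp: cut_apply)
    done
qed

text \<open>A natural number c is below the ordinal represented by alpha (c < alpha as
  ordinals, naturals being the finite ordinals) iff alpha has more than c
  predecessors.\<close>

definition nat_less_ord :: "nat \<Rightarrow> 'o::wellorder \<Rightarrow> bool" where
  "nat_less_ord c a \<longleftrightarrow> infinite {b. b < a} \<or> c < card {b. b < a}"

definition omega_count :: "nat \<Rightarrow> (nat \<Rightarrow> enat) \<Rightarrow> nat" where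
  "omega_count d x = card {i. i < d \<and> x i = \<infinity>}"

end

theory Submission
  imports Defs
begin

definition Wset :: "nat \<Rightarrow> (nat \<Rightarrow> enat) \<Rightarrow> nat set" where
  "Wset d x = {i. i < d \<and> x i = \<infinity>}"

lemma Wset_finite[simp]: "finite (Wset d x)"
  unfolding Wset_def by auto

lemma oc_Wset: "omega_count d x = card (Wset d x)"
  unfolding omega_count_def Wset_def by simp

lemma Wset_mono: "(x::nat \<Rightarrow> enat) \<le> y \<Longrightarrow> Wset d x \<subseteq> Wset d y"
  unfolding Wset_def le_fun_def
proof (intro subsetI, clarsimp)
  fix i assume "\<forall>k. x k \<le> y k" "x i = \<infinity>"
  then have "\<infinity> \<le> y i" by metis
  then show "y i = \<infinity>" by simp
qed

lemma nlo_mono: "m \<le> n \<Longrightarrow> nat_less_ord n a \<Longrightarrow> nat_less_ord m a"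
  unfolding nat_less_ord_def using le_less_trans by blast

lemma nlo_zero: "(\<forall>b. \<not> b < a) \<Longrightarrow> \<not> nat_less_ord n a"
proof -
  assume "\<forall>b. \<not> b < a"
  then have "{b. b < a} = {}" by blast
  then show ?thesis unfolding nat_less_ord_def by simp
qed

lemma nlo_pos: "b < a \<Longrightarrow> nat_less_ord 0 a"
  unfolding nat_less_ord_def
proof -
  assume "b < a"
  then have "{c. c < a} \<noteq> {}" by auto
  then show "infinite {c. c < a} \<or> 0 < card {c. c < a}"
    by (simp add: card_gt_0_iff)
qed

lemma nlo_step:
  assumes "b < a" "nat_less_ord n b"
  shows "nat_less_ord (Suc n) a"
proof (cases "finite {c. c < a}")
  case False then show ?thesis unfolding nat_less_ord_def by blast
next
  case True
  have sub: "insert b {c. c < b} \<subseteq> {c. c < a}" using assms(1) less_trans by blast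
  have fb: "finite {c. c < b}" using finite_subset[OF sub True] by simp
  have bn: "b \<notin> {c. c < b}" by simp
  have e1: "card (insert b {c. c < b}) = Suc (card {c. c < b})" using card_insert_disjoint[OF fb bn] .
  have e2: "card (insert b {c. c < b}) \<le> card {c. c < a}" using card_mono[OF True sub] .
  have e3: "n < card {c. c < b}" using assms(2) fb unfolding nat_less_ord_def by blast
  have "Suc n < card {c. c < a}" using e1 e2 e3 by linarith
  then show ?thesis unfolding nat_less_ord_def by blast
qed

lemma nlo_down:
  assumes "nat_less_ord (Suc n) (a::'o::wellorder)"
  shows "\<exists>b<a. nat_less_ord n b"
proof -
  have "\<exists>S. finite S \<and> card S = Suc (Suc n) \<and> S \<subseteq> {c. c < a}"
  proof (cases "finite {c. c < a}")
    case True
    then have "Suc (Suc n) \<le> card {c. c < a}" using assms unfolding nat_less_ord_def by simp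
    then obtain T where "T \<subseteq> {c. c < a}" "card T = Suc (Suc n)" "finite T"
      by (rule obtain_subset_with_card_n)
    then show ?thesis by blast
  next
    case False then show ?thesis by (rule infinite_arbitrarily_large)
  qed
  then obtain S where S: "finite S" "card S = Suc (Suc n)" "S \<subseteq> {c. c < a}" by blast
  have ne: "S \<noteq> {}" using S(2) by (metis card.empty nat.distinct(1))
  define b where "b = Max S"
  have bS: "b \<in> S" unfolding b_def using Max_in[OF S(1) ne] .
  have sub: "S - {b} \<subseteq> {c. c < b}"
  proof
    fix c assume c: "c \<in> S - {b}"
    then have "c \<le> b" unfolding b_def using Max_ge[OF S(1)] by simp
    moreover have "c \<noteq> b" using c by simp
    ultimately show "c \<in> {c. c < b}" by simp
  qed
  have cS: "card (S - {b}) = Suc n" using S(2) bS by (simp add: card_Diff_singleton)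
  have "nat_less_ord n b"
  proof (cases "finite {c. c < b}")
    case True
    then have "card (S - {b}) \<le> card {c. c < b}" by (rule card_mono[OF _ sub])
    then have "n < card {c. c < b}" using cS by simp
    then show ?thesis unfolding nat_less_ord_def by blast
  next
    case False then show ?thesis unfolding nat_less_ord_def by blast
  qed
  moreover have "b < a" using bS S(3) by blast
  ultimately show ?thesis by blast
qed

lemma Nomega_ext: "x \<in> Nomega d \<Longrightarrow> y \<in> Nomega d \<Longrightarrow> map x [0..<d] = map y [0..<d] \<Longrightarrow> x = y"
proof
  fix k assume "x \<in> Nomega d" "y \<in> Nomega d" "map x [0..<d] = map y [0..<d]"
  then show "x k = y k" unfolding Nomega_def
    by (cases "k < d") (auto simp: map_eq_conv)
qed

lemma below_lt:
  assumes acc: "acc_candidate (Nomega d) s" and bel: "cand_below s z" and zZ: "z \<in> Nomega d"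
  shows "omega_count d (s i) < omega_count d z"
proof (rule ccontr)
  assume "\<not> ?thesis"
  then have ge: "card (Wset d z) \<le> card (Wset d (s i))" by (simp add: oc_Wset)
  have sm: "strict_mono s" using acc unfolding acc_candidate_def strict_mono_Suc_iff by blast
  have inZ: "\<And>j. s j \<in> Nomega d" using acc unfolding acc_candidate_def by blast
  have blw: "\<And>j. s j \<le> z" using bel unfolding cand_below_def by blast
  have Wi: "Wset d (s i) = Wset d z"
    using card_subset_eq[OF Wset_finite Wset_mono[OF blw]] ge
    by (metis Wset_finite Wset_mono blw card_seteq)
  have Wj: "Wset d (s (i + j)) = Wset d z" for j
  proof -
    have "s i \<le> s (i + j)" using sm by (simp add: strict_mono_less_eq)
    then have "Wset d (s i) \<subseteq> Wset d (s (i+j))" by (rule Wset_mono)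
    moreover have "Wset d (s (i+j)) \<subseteq> Wset d z" by (rule Wset_mono[OF blw])
    ultimately show ?thesis using Wi by blast
  qed
  define M where "M = Max (insert 0 ((\<lambda>k. the_enat (z k)) ` {..<d}))"
  define V where "V = insert \<infinity> (enat ` {..M})"
  have fV: "finite V" unfolding V_def by simp
  have inV: "s (i + j) k \<in> V" if "k < d" for j k
  proof (cases "z k = \<infinity>")
    case True
    then have "k \<in> Wset d z" using that by (simp add: Wset_def)
    then have "k \<in> Wset d (s (i+j))" using Wj[of j] by simp
    then have "s (i+j) k = \<infinity>" by (simp add: Wset_def)
    then show ?thesis by (simp add: V_def)
  next
    case False
    then obtain m where m: "z k = enat m" by auto
    have "m \<le> M" unfolding M_def using m that
      by (intro Max_ge) force+
    have "s (i+j) k \<le> z k" using blw[of "i+j"] by (simp add: le_fun_def)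
    then have "s (i+j) k \<le> enat m" using m by simp
    then obtain m' where "s (i+j) k = enat m'" "m' \<le> m"
      by (metis enat_ile enat_ord_simps(1))
    then show ?thesis using \<open>m \<le> M\<close> by (auto simp: V_def)
  qed
  define g where "g j = map (s (i + j)) [0..<d]" for j
  have "range g \<subseteq> {xs. set xs \<subseteq> V \<and> length xs = d}"
    using inV by (auto simp: g_def)
  then have fin: "finite (range g)" using finite_lists_length_eq[OF fV] finite_subset by blast
  have "inj g"
  proof
    fix a b assume "g a = g b"
    then have "s (i + a) = s (i + b)" unfolding g_def using Nomega_ext inZ by blast
    then show "a = b" using strict_mono_eq[OF sm] by simp
  qed
  then have "infinite (range g)" using infinite_UNIV_nat finite_imageD by blast
  then show False using fin by blast
qed

theorem proposition23:
  fixes d :: nat and \<alpha> :: "'o::wellorder"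
  shows "A_level (Nomega d) \<alpha> = {x \<in> Nomega d. nat_less_ord (omega_count d x) \<alpha>}"
proof (induction \<alpha> rule: less_induct)
  case (less a)
  show ?case
  proof (cases "\<forall>b. \<not> b < a")
    case True
    then show ?thesis using nlo_zero[OF True] by (subst A_level_eq) simp
  next
    case False
    then obtain b0 where b0: "b0 < a" by blast
    have key: "(\<forall>s. acc_candidate (Nomega d) s \<and> cand_below s x \<longrightarrow>
                 (\<exists>b<a. goes_through s (A_level (Nomega d) b)))
               \<longleftrightarrow> nat_less_ord (omega_count d x) a" if xZ: "x \<in> Nomega d" for x
    proof
      assume H: "\<forall>s. acc_candidate (Nomega d) s \<and> cand_below s x \<longrightarrow>
                 (\<exists>b<a. goes_through s (A_level (Nomega d) b))"
      show "nat_less_ord (omega_count d x) a"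
      proof (rule ccontr)
        assume nl: "\<not> nat_less_ord (omega_count d x) a"
        then have "omega_count d x \<noteq> 0" using nlo_pos[OF b0] by (metis (full_types))
        then have "Wset d x \<noteq> {}" by (auto simp: oc_Wset)
        then obtain j where j: "j < d" "x j = \<infinity>" by (auto simp: Wset_def)
        define s where "s i = x(j := enat i)" for i :: nat
        have sZ: "s i \<in> Nomega d" for i using xZ j unfolding s_def Nomega_def by auto
        have "s i < s (Suc i)" for i
          unfolding s_def less_fun_def le_fun_def
          by (auto intro!: exI[of _ j])
        then have acc: "acc_candidate (Nomega d) s" using sZ by (simp add: acc_candidate_def)
        have bel: "cand_below s x" unfolding cand_below_def s_def le_fun_def using j by auto
        obtain b i where bi: "b < a" "s i \<in> A_level (Nomega d) b"
          using H acc bel unfolding goes_through_def by blast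
        have n1: "nat_less_ord (omega_count d (s i)) b" using bi less[OF bi(1)] by auto
        have w1: "Wset d (s i) = Wset d x - {j}"
          unfolding Wset_def s_def using j by auto
        have jW: "j \<in> Wset d x" using j by (simp add: Wset_def)
        have "Suc (omega_count d (s i)) = omega_count d x"
          unfolding oc_Wset w1 using card_Suc_Diff1[OF Wset_finite jW] .
        then have "nat_less_ord (omega_count d x) a" using nlo_step[OF bi(1) n1] by simp
        then show False using nl by blast
      qed
    next
      assume N: "nat_less_ord (omega_count d x) a"
      show "\<forall>s. acc_candidate (Nomega d) s \<and> cand_below s x \<longrightarrow>
                 (\<exists>b<a. goes_through s (A_level (Nomega d) b))"
      proof (intro allI impI)
        fix s assume sa: "acc_candidate (Nomega d) s \<and> cand_below s x"
        have "omega_count d (s 0) < omega_count d x" using below_lt sa xZ by blast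
        then have "nat_less_ord (Suc (omega_count d (s 0))) a" using nlo_mono[OF _ N] by (simp add: Suc_le_eq)
        then obtain b where b: "b < a" "nat_less_ord (omega_count d (s 0)) b"
          using nlo_down by blast
        have "s 0 \<in> Nomega d" using sa by (simp add: acc_candidate_def)
        then have "s 0 \<in> A_level (Nomega d) b" using less[OF b(1)] b(2) by auto
        then show "\<exists>b<a. goes_through s (A_level (Nomega d) b)"
          using b(1) unfolding goes_through_def by blast
      qed
    qed
    show ?thesis
      apply (subst A_level_eq)
      using False key by auto
  qed
qed

end
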